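(* Let $G$ be an almost well-covered $\{C_3,C_4,C_5,C_7\}$-free graph. Then every vertex $x\in V(G_0)$ satisfies $d_{G_0}(x)\leq 2$.
   Context: All graphs are finite and simple. $C_n$ is the cycle on $n$ vertices; $G$ is $\{C_3,C_4,C_5,C_7\}$-free if it has no induced subgraph isomorphic to any of these cycles. $d_{G_0}(x)$ is the degree of $x$ in $G_0$. For a graph $G$, $\alpha(G)$ is the maximum size of an independent set and $i(G)$ the minimum size of an inclusion-maximal independent set; $G$ is almost well-covered if $\alpha(G)-i(G)=1$. Types of vertices: let $U$ be the set of vertices of $G$ whose connected component is a complete graph. In $G-U$, vertices of degree $1$ are leaves and the others are internal vertices. An internal vertex adjacent to exactly $k$ leaves is of type $k$; every vertex of $U$ is of type $0$. $G_0$ denotes the subgraph of $G$ induced by all vertices of type $0$. *)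

theory Defs
  imports Main
begin

definition simple_graph :: "'a set \<Rightarrow> ('a \<Rightarrow> 'a \<Rightarrow> bool) \<Rightarrow> bool" where
  "simple_graph V E \<longleftrightarrow> finite V \<and> (\<forall>x y. E x y \<longrightarrow> E y x)
     \<and> (\<forall>x. \<not> E x x) \<and> (\<forall>x y. E x y \<longrightarrow> x \<in> V \<and> y \<in> V)"

definition has_induced_cycle :: "'a set \<Rightarrow> ('a \<Rightarrow> 'a \<Rightarrow> bool) \<Rightarrow> nat \<Rightarrow> bool" where
  "has_induced_cycle V E n \<longleftrightarrow> (\<exists>f. inj_on f {..<n} \<and> f ` {..<n} \<subseteq> V \<and>
     (\<forall>i<n. \<forall>j<n. E (f i) (f j) \<longleftrightarrow> (j = (i + 1) mod n \<or> i = (j + 1) mod n)))"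

definition indep_set :: "'a set \<Rightarrow> ('a \<Rightarrow> 'a \<Rightarrow> bool) \<Rightarrow> 'a set \<Rightarrow> bool" where
  "indep_set V E S \<longleftrightarrow> S \<subseteq> V \<and> (\<forall>x\<in>S. \<forall>y\<in>S. \<not> E x y)"

definition maximal_indep_set :: "'a set \<Rightarrow> ('a \<Rightarrow> 'a \<Rightarrow> bool) \<Rightarrow> 'a set \<Rightarrow> bool" where
  "maximal_indep_set V E S \<longleftrightarrow> indep_set V E S \<and>
     (\<forall>T. indep_set V E T \<and> S \<subseteq> T \<longrightarrow> T = S)"

definition indep_number :: "'a set \<Rightarrow> ('a \<Rightarrow> 'a \<Rightarrow> bool) \<Rightarrow> nat" where
  "indep_number V E = Max (card ` {S. indep_set V E S})"

definition indep_domination_number :: "'a set \<Rightarrow> ('a \<Rightarrow> 'a \<Rightarrow> bool) \<Rightarrow> nat" where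
  "indep_domination_number V E = Min (card ` {S. maximal_indep_set V E S})"

definition almost_well_covered :: "'a set \<Rightarrow> ('a \<Rightarrow> 'a \<Rightarrow> bool) \<Rightarrow> bool" where
  "almost_well_covered V E \<longleftrightarrow>
     int (indep_number V E) - int (indep_domination_number V E) = 1"

definition component :: "'a set \<Rightarrow> ('a \<Rightarrow> 'a \<Rightarrow> bool) \<Rightarrow> 'a \<Rightarrow> 'a set" where
  "component V E x = {y \<in> V. (\<lambda>a b. E a b \<and> a \<in> V \<and> b \<in> V)\<^sup>*\<^sup>* x y}"

definition complete_comp_vertices :: "'a set \<Rightarrow> ('a \<Rightarrow> 'a \<Rightarrow> bool) \<Rightarrow> 'a set" where
  "complete_comp_vertices V E = {x \<in> V. \<forall>a\<in>component V E x. \<forall>b\<in>component V E x.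
      a \<noteq> b \<longrightarrow> E a b}"

definition deg_in :: "'a set \<Rightarrow> ('a \<Rightarrow> 'a \<Rightarrow> bool) \<Rightarrow> 'a \<Rightarrow> nat" where
  "deg_in W E x = card {y \<in> W. E x y}"

definition leaves :: "'a set \<Rightarrow> ('a \<Rightarrow> 'a \<Rightarrow> bool) \<Rightarrow> 'a set" where
  "leaves V E = {x \<in> V - complete_comp_vertices V E.
      deg_in (V - complete_comp_vertices V E) E x = 1}"

definition internal_vertices :: "'a set \<Rightarrow> ('a \<Rightarrow> 'a \<Rightarrow> bool) \<Rightarrow> 'a set" where
  "internal_vertices V E = {x \<in> V - complete_comp_vertices V E.
      deg_in (V - complete_comp_vertices V E) E x \<noteq> 1}"

definition of_type :: "'a set \<Rightarrow> ('a \<Rightarrow> 'a \<Rightarrow> bool) \<Rightarrow> nat \<Rightarrow> 'a \<Rightarrow> bool" where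
  "of_type V E k x \<longleftrightarrow>
     (x \<in> internal_vertices V E \<and> card {y \<in> leaves V E. E x y} = k)
     \<or> (k = 0 \<and> x \<in> complete_comp_vertices V E)"

definition type0_vertices :: "'a set \<Rightarrow> ('a \<Rightarrow> 'a \<Rightarrow> bool) \<Rightarrow> 'a set" where
  "type0_vertices V E = {x \<in> V. of_type V E 0 x}"

end

theory Submission
  imports Defs
begin

lemma cyc_intro:
  assumes "distinct xs" "set xs \<subseteq> V"
    "\<forall>i<length xs. \<forall>j<length xs. E (xs!i) (xs!j) \<longleftrightarrow> (j = (i+1) mod length xs \<or> i = (j+1) mod length xs)"
    "n = length xs"
  shows "has_induced_cycle V E n"
  unfolding has_induced_cycle_def
  apply (rule exI[of _ "nth xs"])
  using assms by (auto simp: inj_on_nth set_conv_nth)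

lemma sg: assumes "simple_graph V E"
  shows "finite V" "E x y \<Longrightarrow> E y x" "\<not> E x x" "E x y \<Longrightarrow> x \<in> V" "E x y \<Longrightarrow> y \<in> V"
  using assms unfolding simple_graph_def by blast+

lemma tri:
  assumes g: "simple_graph V E" and n3: "\<not> has_induced_cycle V E 3"
    and "E a b" "E b c" "E c a"
  shows False
proof -
  have s: "E u v \<Longrightarrow> E v u" "\<not> E u u" for u v using sg[OF g] by auto
  have e: "E b a" "E c b" "E a c" "\<not> E a a" "\<not> E b b" "\<not> E c c" using assms s by auto
  have d: "a \<noteq> b" "b \<noteq> c" "a \<noteq> c" using assms e by auto
  have v: "a \<in> V" "b \<in> V" "c \<in> V" using assms sg(4)[OF g] by auto
  have "has_induced_cycle V E 3"
    apply (rule cyc_intro[of "[a,b,c]"])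
    subgoal using d by simp
    subgoal using v by simp
    subgoal apply (simp only: list.size) by (simp add: All_less_Suc assms e)
    by simp
  with n3 show False by simp
qed

lemma c4:
  assumes g: "simple_graph V E" and n3: "\<not> has_induced_cycle V E 3" and n4: "\<not> has_induced_cycle V E 4"
    and "E a b" "E b c" "E c d" "E d a" "a \<noteq> c" "b \<noteq> d"
  shows False
proof -
  have s: "E u v \<Longrightarrow> E v u" "\<not> E u u" for u v using sg[OF g] by auto
  have e: "E b a" "E c b" "E d c" "E a d" "\<not> E a a" "\<not> E b b" "\<not> E c c" "\<not> E d d" using assms s by auto
  have ch: "\<not> E a c" "\<not> E c a" "\<not> E b d" "\<not> E d b" using tri[OF g n3] assms e by metis+
  have d: "a \<noteq> b" "b \<noteq> c" "c \<noteq> d" "d \<noteq> a" using assms e by auto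
  have v: "a \<in> V" "b \<in> V" "c \<in> V" "d \<in> V" using assms sg(4)[OF g] by auto
  have "has_induced_cycle V E 4"
    apply (rule cyc_intro[of "[a,b,c,d]"])
    subgoal using d assms by auto
    subgoal using v by simp
    subgoal apply (simp only: list.size) by (simp add: All_less_Suc assms e ch)
    by simp
  with n4 show False by simp
qed

lemma c5:
  assumes g: "simple_graph V E" and n3: "\<not> has_induced_cycle V E 3" and n5: "\<not> has_induced_cycle V E 5"
    and "E a b" "E b c" "E c d" "E d e" "E e a"
  shows False
proof -
  have s: "E u v \<Longrightarrow> E v u" "\<not> E u u" for u v using sg[OF g] by auto
  have e: "E b a" "E c b" "E d c" "E e d" "E a e" "\<not> E a a" "\<not> E b b" "\<not> E c c" "\<not> E d d" "\<not> E e e"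
    using assms s by auto
  note t = tri[OF g n3]
  have d: "a \<noteq> c" "a \<noteq> d" "b \<noteq> d" "b \<noteq> e" "c \<noteq> e"
    using assms e t by metis+
  have d2: "a \<noteq> b" "b \<noteq> c" "c \<noteq> d" "d \<noteq> e" "e \<noteq> a" using assms e by auto
  have ch: "\<not> E a c" "\<not> E c a" "\<not> E a d" "\<not> E d a" "\<not> E b d" "\<not> E d b" "\<not> E b e" "\<not> E e b"
     "\<not> E c e" "\<not> E e c"
    using assms e t by metis+
  have v: "a \<in> V" "b \<in> V" "c \<in> V" "d \<in> V" "e \<in> V" using assms sg(4)[OF g] by auto
  have "has_induced_cycle V E 5"
    apply (rule cyc_intro[of "[a,b,c,d,e]"])
    subgoal using d d2 by auto
    subgoal using v by simp
    subgoal apply (simp only: list.size) by (simp add: All_less_Suc assms e ch)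
    by simp
  with n5 show False by simp
qed


lemma c7:
  assumes g: "simple_graph V E" and n3: "\<not> has_induced_cycle V E 3" and n5: "\<not> has_induced_cycle V E 5"
    and n7: "\<not> has_induced_cycle V E 7"
    and "E a b" "E b c" "E c d" "E d e" "E e f" "E f h" "E h a"
  shows False
proof -
  have s: "E u v \<Longrightarrow> E v u" "\<not> E u u" for u v using sg[OF g] by auto
  have e: "E b a" "E c b" "E d c" "E e d" "E f e" "E h f" "E a h"
     "\<not> E a a" "\<not> E b b" "\<not> E c c" "\<not> E d d" "\<not> E e e" "\<not> E f f" "\<not> E h h"
    using assms s by auto
  note t = tri[OF g n3]
  note q = c5[OF g n3 n5]
  have d: "a \<noteq> c" "a \<noteq> d" "a \<noteq> e" "a \<noteq> f" "b \<noteq> d" "b \<noteq> e" "b \<noteq> f" "b \<noteq> h"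
     "c \<noteq> e" "c \<noteq> f" "c \<noteq> h" "d \<noteq> f" "d \<noteq> h" "e \<noteq> h"
    using assms e t q by metis+
  have d2: "a \<noteq> b" "b \<noteq> c" "c \<noteq> d" "d \<noteq> e" "e \<noteq> f" "f \<noteq> h" "h \<noteq> a" using assms e by auto
  have ch: "\<not> E a c" "\<not> E a d" "\<not> E a e" "\<not> E a f" "\<not> E b d" "\<not> E b e" "\<not> E b f" "\<not> E b h"
     "\<not> E c e" "\<not> E c f" "\<not> E c h" "\<not> E d f" "\<not> E d h" "\<not> E e h"
    using assms e t q by metis+
  have ch2: "\<not> E c a" "\<not> E d a" "\<not> E e a" "\<not> E f a" "\<not> E d b" "\<not> E e b" "\<not> E f b" "\<not> E h b"
     "\<not> E e c" "\<not> E f c" "\<not> E h c" "\<not> E f d" "\<not> E h d" "\<not> E h e"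
    using ch s by blast+
  have v: "a \<in> V" "b \<in> V" "c \<in> V" "d \<in> V" "e \<in> V" "f \<in> V" "h \<in> V" using assms sg(4)[OF g] by auto
  have "has_induced_cycle V E 7"
    apply (rule cyc_intro[of "[a,b,c,d,e,f,h]"])
    subgoal using d d2 by auto
    subgoal using v by simp
    subgoal apply (simp only: list.size) by (simp add: All_less_Suc assms e ch ch2)
    by simp
  with n7 show False by simp
qed


lemma exists_maximal:
  assumes "finite V" "indep_set V E S"
  shows "\<exists>M. maximal_indep_set V E M \<and> S \<subseteq> M"
proof -
  let ?A = "{T. indep_set V E T \<and> S \<subseteq> T}"
  have "?A \<subseteq> Pow V" unfolding indep_set_def by auto
  hence fA: "finite ?A" using assms(1) finite_subset by blast
  have "S \<in> ?A" using assms by auto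
  then obtain m where m: "m \<in> ?A" "\<forall>b\<in>?A. m \<le> b \<longrightarrow> m = b"
    using finite_has_maximal2[OF fA] by blast
  have "maximal_indep_set V E m" unfolding maximal_indep_set_def
    using m by auto
  thus ?thesis using m by auto
qed

theorem lemma19:
  fixes V :: "'a set" and E :: "'a \<Rightarrow> 'a \<Rightarrow> bool"
  assumes "simple_graph V E"
    and "almost_well_covered V E"
    and "\<forall>n\<in>{3, 4, 5, 7}. \<not> has_induced_cycle V E n"
    and "x \<in> type0_vertices V E"
  shows "deg_in (type0_vertices V E) E x \<le> 2"
proof (rule ccontr)
  assume neg: "\<not> ?thesis"
  note g = assms(1)
  have n3: "\<not> has_induced_cycle V E 3" and n4: "\<not> has_induced_cycle V E 4"
    and n5: "\<not> has_induced_cycle V E 5" and n7: "\<not> has_induced_cycle V E 7"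
    using assms(3) by auto
  note t = tri[OF g n3]
  note C4 = c4[OF g n3 n4]
  note C5 = c5[OF g n3 n5]
  note C7 = c7[OF g n3 n5 n7]
  have fin: "finite V" using sg[OF g] by auto
  have sym: "E u v \<Longrightarrow> E v u" for u v using sg[OF g] by auto
  have irr: "\<not> E u u" for u using sg[OF g] by auto
  have inV: "E u v \<Longrightarrow> u \<in> V" "E u v \<Longrightarrow> v \<in> V" for u v using sg[OF g] by auto
  define U where "U = complete_comp_vertices V E"
  define T0 where "T0 = type0_vertices V E"
  define Y where "Y = {y \<in> T0. E x y}"
  have T0V: "T0 \<subseteq> V" unfolding T0_def type0_vertices_def by auto
  have xV: "x \<in> V" using assms(4) unfolding type0_vertices_def by auto
  have finY: "finite Y" using T0V fin unfolding Y_def by (auto intro: finite_subset[of _ V])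
  have cY: "card Y \<ge> 3" using neg unfolding Y_def T0_def deg_in_def by auto
  have Yx: "E x y" "y \<in> V" "y \<in> T0" if "y \<in> Y" for y using that T0V unfolding Y_def by blast+
  have two: "\<exists>y'\<in>Y. y' \<noteq> y" for y
  proof (rule ccontr)
    assume "\<not> ?thesis" hence "Y \<subseteq> {y}" by auto
    hence "card Y \<le> card {y}" by (intro card_mono) auto
    hence "card Y \<le> 1" by simp
    with cY show False by simp
  qed
  let ?R = "(\<lambda>a b. E a b \<and> a \<in> V \<and> b \<in> V)"
  have step: "E a b \<Longrightarrow> ?R a b" for a b using inV by auto
  have YU: "y \<notin> U" if "y \<in> Y" for y
  proof
    assume yU: "y \<in> U"
    obtain y' where y': "y' \<in> Y" "y' \<noteq> y" using two by blast
    have "?R\<^sup>*\<^sup>* y y'"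
      apply (rule rtranclp_trans[where y=x])
      apply (rule r_into_rtranclp) using step[OF sym[OF Yx(1)[OF that]]] apply simp
      apply (rule r_into_rtranclp) using step[OF Yx(1)[OF y'(1)]] apply simp
      done
    hence "y' \<in> component V E y" unfolding component_def using Yx(2)[OF y'(1)] by auto
    moreover have "y \<in> component V E y" unfolding component_def using Yx(2)[OF that] by auto
    ultimately have "E y y'" using yU y'(2) unfolding U_def complete_comp_vertices_def by auto
    thus False using t[of x y y'] Yx that y' sym by blast
  qed
  have Yc0: "card {l \<in> leaves V E. E y l} = 0" if "y \<in> Y" for y
    using Yx(3)[OF that] YU[OF that] unfolding T0_def type0_vertices_def of_type_def U_def by auto
  have zU: "z \<notin> U" if "y \<in> Y" "E y z" "z \<noteq> x" for y z
  proof
    assume zU: "z \<in> U"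
    have "?R\<^sup>*\<^sup>* z x"
      apply (rule rtranclp_trans[where y=y])
      apply (rule r_into_rtranclp) using step[OF sym[OF that(2)]] apply simp
      apply (rule r_into_rtranclp) using step[OF sym[OF Yx(1)[OF that(1)]]] apply simp
      done
    hence "x \<in> component V E z" unfolding component_def using xV by auto
    moreover have "z \<in> component V E z" unfolding component_def using inV that by auto
    ultimately have "E z x" using zU that(3) unfolding U_def complete_comp_vertices_def by auto
    thus False using t[of x y z] Yx that by blast
  qed
  have finL: "finite (leaves V E)" using fin unfolding leaves_def by auto
  have zleaf: "z \<notin> leaves V E" if "y \<in> Y" "E y z" for y z
  proof
    assume "z \<in> leaves V E"
    hence "z \<in> {l \<in> leaves V E. E y l}" using that by auto
    moreover have "finite {l \<in> leaves V E. E y l}" using finL by auto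
    ultimately have "card {l \<in> leaves V E. E y l} > 0" using card_gt_0_iff by blast
    thus False using Yc0[OF that(1)] by simp
  qed
  have zw: "\<exists>w. E z w \<and> w \<notin> Y" if "y \<in> Y" "E y z" "z \<noteq> x" for y z
  proof -
    define N where "N = {w \<in> V - U. E z w}"
    have zV: "z \<in> V" using inV(2)[OF that(2)] .
    have zVU: "z \<in> V - U" using zU[OF that] zV by blast
    have "z \<notin> leaves V E" using zleaf[OF that(1,2)] .
    hence "deg_in (V - U) E z \<noteq> 1"
      using zVU unfolding leaves_def U_def by blast
    hence c1: "card N \<noteq> 1" unfolding N_def deg_in_def by simp
    have yN: "y \<in> N" unfolding N_def using Yx(2)[OF that(1)] YU[OF that(1)] sym[OF that(2)] by blast
    have "\<exists>w\<in>N. w \<noteq> y"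
    proof (rule ccontr)
      assume "\<not> ?thesis" hence "N = {y}" using yN by blast
      thus False using c1 by simp
    qed
    then obtain w where w: "w \<in> N" "w \<noteq> y" by blast
    have Ezw: "E z w" using w(1) unfolding N_def by blast
    have "w \<notin> Y"
    proof
      assume "w \<in> Y"
      have "E w x" using sym Yx(1)[OF \<open>w \<in> Y\<close>] by blast
      thus False using C4[of x y z w] Yx(1)[OF that(1)] that(2,3) w(2) Ezw by blast
    qed
    thus ?thesis using Ezw by blast
  qed
  define Z where "Z = {z. \<exists>y\<in>Y. E y z \<and> z \<noteq> x}"
  define wf where "wf z = (SOME w. E z w \<and> w \<notin> Y)" for z
  have wf: "E z (wf z) \<and> wf z \<notin> Y" if zZ: "z \<in> Z" for z
  proof -
    obtain y where "y \<in> Y" "E y z" "z \<noteq> x" using zZ unfolding Z_def by auto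
    from zw[OF this] show ?thesis unfolding wf_def by (rule someI_ex)
  qed
  define S where "S = insert x (wf ` Z)"
  have xw: "\<not> E x (wf z)" if zZ: "z \<in> Z" for z
  proof
    assume a: "E x (wf z)"
    obtain y where y: "y \<in> Y" "E y z" "z \<noteq> x" using zZ unfolding Z_def by auto
    have "wf z \<noteq> y" using wf[OF that] y(1) by auto
    have "E (wf z) z" "E z y" "E y x" using sym wf[OF that] y Yx(1)[OF y(1)] by blast+
    thus False using C4[of x "wf z" z y] a y(3) \<open>wf z \<noteq> y\<close> by blast
  qed
  have ww: "\<not> E (wf z) (wf z')" if zZ: "z \<in> Z" "z' \<in> Z" for z z'
  proof
    assume a: "E (wf z) (wf z')"
    obtain y where y: "y \<in> Y" "E y z" "z \<noteq> x" using zZ(1) unfolding Z_def by auto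
    obtain y' where y': "y' \<in> Y" "E y' z'" "z' \<noteq> x" using zZ(2) unfolding Z_def by auto
    show False
    proof (cases "y = y'")
      case True
      have "E (wf z') z'" "E z' y" using sym wf[OF zZ(2)] y' True by blast+
      thus False using C5[of y z "wf z" "wf z'" z'] a wf[OF zZ(1)] y by blast
    next
      case False
      have "E (wf z') z'" "E z' y'" "E y' x" using sym wf[OF zZ(2)] y' Yx(1)[OF y'(1)] by blast+
      thus False using C7[of x y z "wf z" "wf z'" z' y'] a wf[OF zZ(1)] y Yx(1)[OF y(1)] by blast
    qed
  qed
  have Sind: "indep_set V E S"
    unfolding indep_set_def S_def
  proof (intro conjI ballI)
    show "insert x (wf ` Z) \<subseteq> V" using xV wf inV(2) by blast
  next
    fix a b assume "a \<in> insert x (wf ` Z)" "b \<in> insert x (wf ` Z)"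
    have xw': "\<not> E (wf z) x" if "z \<in> Z" for z using xw[OF that] sym by blast
    from \<open>a \<in> _\<close> \<open>b \<in> _\<close> show "\<not> E a b" using xw xw' ww irr by auto
  qed
  obtain M where M: "maximal_indep_set V E M" "S \<subseteq> M" using exists_maximal[OF fin Sind] by blast
  have Mi: "indep_set V E M" using M unfolding maximal_indep_set_def by auto
  have MV: "M \<subseteq> V" using Mi unfolding indep_set_def by auto
  have xM: "x \<in> M" using M S_def by auto
  have YM: "y \<notin> M" if "y \<in> Y" for y
    using Mi xM Yx(1)[OF that] unfolding indep_set_def by auto
  have ZM: "z \<notin> M" if "z \<in> Z" for z
  proof -
    have "wf z \<in> M" using M that S_def by auto
    thus ?thesis using Mi wf[OF that] unfolding indep_set_def by auto
  qed
  define M' where "M' = (M - {x}) \<union> Y"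
  have M'i: "indep_set V E M'"
    unfolding indep_set_def M'_def
  proof (intro conjI ballI)
    show "M - {x} \<union> Y \<subseteq> V" using MV Yx by auto
  next
    fix a b assume a: "a \<in> M - {x} \<union> Y" and b: "b \<in> M - {x} \<union> Y"
    have yy: "\<not> E y y'" if "y \<in> Y" "y' \<in> Y" for y y'
      using t[of x y y'] Yx that sym by blast
    have ym: "\<not> E y m" if "y \<in> Y" "m \<in> M - {x}" for y m
    proof
      assume "E y m"
      hence "m \<in> Z" unfolding Z_def using that by auto
      thus False using ZM that by auto
    qed
    show "\<not> E a b"
    proof -
      { assume "a \<in> M - {x}" "b \<in> M - {x}" hence ?thesis using Mi unfolding indep_set_def by auto }
      moreover { assume "a \<in> Y" "b \<in> Y" hence ?thesis using yy by auto }
      moreover { assume "a \<in> Y" "b \<in> M - {x}" hence ?thesis using ym by auto }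
      moreover { assume "a \<in> M - {x}" "b \<in> Y" hence ?thesis using ym sym by blast }
      ultimately show ?thesis using a b by blast
    qed
  qed
  have finM: "finite M" using MV fin finite_subset by blast
  have "card M' = card (M - {x}) + card Y"
    unfolding M'_def using finM finY YM by (intro card_Un_disjoint) auto
  also have "card (M - {x}) = card M - 1" using xM finM by simp
  finally have cM': "card M' \<ge> card M + 2" using cY xM finM card_gt_0_iff by fastforce
  have "{S. indep_set V E S} \<subseteq> Pow V" by (auto simp: indep_set_def)
  hence "finite {S. indep_set V E S}" using fin finite_subset by blast
  hence f1: "finite (card ` {S. indep_set V E S})" by blast
  have "{S. maximal_indep_set V E S} \<subseteq> Pow V" by (auto simp: maximal_indep_set_def indep_set_def)
  hence "finite {S. maximal_indep_set V E S}" using fin finite_subset by blast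
  hence f2: "finite (card ` {S. maximal_indep_set V E S})" by blast
  have "indep_number V E \<ge> card M'"
    unfolding indep_number_def using f1 M'i by (intro Max_ge) auto
  moreover have "indep_domination_number V E \<le> card M"
    unfolding indep_domination_number_def using f2 M(1) by (intro Min_le) auto
  ultimately show False using assms(2) cM' unfolding almost_well_covered_def by linarith
qed

end
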